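(* Let $0<q<1$, $\alpha>-1$ and let $n\ge0$ be an integer. The matrix $\left((q^{\alpha+1};q)_{j+k}\,q^{-\binom{j+k+1}{2}-\alpha(j+k)}\right)_{j,k=0}^{n}$ is invertible and its inverse is $(\gamma_{j,k})_{j,k=0}^n$ with \[ \gamma_{j,k}=\sum_{m=0}^{n}\frac{(q^{\alpha+1};q)_m\,q^{m(j+k+1)}\,(q^{-m};q)_j\,(q^{-m};q)_k\,q^{\alpha(j+k)+\binom{j+1}{2}+\binom{k+1}{2}}}{(q;q)_m\,(q;q)_j\,(q;q)_k\,(q^{\alpha+1};q)_j\,(q^{\alpha+1};q)_k}. \]
   Context: $(a;q)_m=\prod_{i=0}^{m-1}(1-aq^i)$ for integers $m\ge0$ (empty product $=1$); in particular $(q^{-m};q)_j=0$ for $j>m$. *)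

theory Defs
  imports Complex_Main "Jordan_Normal_Form.Matrix"
begin

definition qpoch :: "real \<Rightarrow> real \<Rightarrow> nat \<Rightarrow> real" where
  "qpoch a q m = (\<Prod>i<m. (1 - a * q ^ i))"

definition momMat :: "real \<Rightarrow> real \<Rightarrow> nat \<Rightarrow> real mat" where
  "momMat q \<alpha> n = mat (n+1) (n+1) (\<lambda>(j,k).
     qpoch (q powr (\<alpha>+1)) q (j+k) *
     q powr (- real ((j+k+1) choose 2) - \<alpha> * real (j+k)))"

definition gammaEntry :: "real \<Rightarrow> real \<Rightarrow> nat \<Rightarrow> nat \<Rightarrow> nat \<Rightarrow> real" where
  "gammaEntry q \<alpha> n j k = (\<Sum>m=0..n.
     (qpoch (q powr (\<alpha>+1)) q m * q ^ (m*(j+k+1)) *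
      qpoch (q powr (- real m)) q j * qpoch (q powr (- real m)) q k *
      q powr (\<alpha> * real (j+k) + real ((j+1) choose 2) + real ((k+1) choose 2)))
     / (qpoch q q m * qpoch q q j * qpoch q q k *
        qpoch (q powr (\<alpha>+1)) q j * qpoch (q powr (\<alpha>+1)) q k))"

definition gammaMat :: "real \<Rightarrow> real \<Rightarrow> nat \<Rightarrow> real mat" where
  "gammaMat q \<alpha> n = mat (n+1) (n+1) (\<lambda>(j,k). gammaEntry q \<alpha> n j k)"

end

theory Submission
  imports Defs "Jordan_Normal_Form.Determinant"
begin

lemma qpoch_Suc: "qpoch b q (Suc j) = qpoch b q j * (1 - b*q^j)"
  by (simp add: qpoch_def)

lemma qpoch_add: "qpoch b q (j+k) = qpoch b q j * (\<Prod>t<k. 1 - b*q^t*q^j)"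
  by (induction k) (simp_all add: qpoch_Suc power_add mult_ac)

lemma qpoch_pos: assumes "0 \<le> b" "b < 1" "0 < q" "q \<le> 1" shows "qpoch b q j > 0"
  unfolding qpoch_def
proof (rule prod_pos)
  fix i assume "i \<in> {..<j}"
  have "q^i \<le> 1" using assms by (simp add: power_le_one_iff)
  hence "b*q^i \<le> b" using assms by (simp add: mult_left_le)
  thus "0 < 1 - b*q^i" using assms by simp
qed

lemma qlt1: assumes "0 < (q::real)" "q < 1" shows "0 < 1 - q*q^j"
proof -
  have "q^j \<le> 1" using assms by (simp add: power_le_one_iff)
  hence "q*q^j \<le> q*1" using assms by (intro mult_left_mono) auto
  thus ?thesis using assms by linarith
qed

definition cc :: "real \<Rightarrow> nat \<Rightarrow> nat \<Rightarrow> real" where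
  "cc q m j = qpoch (1/q^m) q j / qpoch q q j"

lemma cc_zero: assumes "q \<noteq> 0" "m < j" shows "cc q m j = 0"
proof -
  have "qpoch (1/q^m) q j = 0" unfolding qpoch_def
    by (rule prod_zero) (use assms in auto)
  thus ?thesis by (simp add: cc_def)
qed

lemma cc_0[simp]: "cc q m 0 = 1" by (simp add: cc_def qpoch_def)

lemma cc_rec: assumes "0 < q" "q < 1"
  shows "cc q (Suc m) (Suc j) = cc q m (Suc j) - cc q m j / q^(Suc m)"
proof -
  have p1: "qpoch (1/q^(Suc m)) q (Suc j) = (1 - 1/q^(Suc m)) * qpoch (1/q^m) q j"
    unfolding qpoch_def prod.lessThan_Suc_shift
    using assms by (simp add: field_simps)
  have qq: "qpoch q q j > 0" using assms by (intro qpoch_pos) auto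
  have f: "1 - q*q^j > 0" using qlt1[OF assms] .
  show ?thesis unfolding cc_def p1 qpoch_Suc[of "1/q^m"] qpoch_Suc[of q]
    using qq f assms by (simp add: field_simps)
qed

lemma qbin: assumes "0 < q" "q < 1"
  shows "(\<Sum>j<Suc m. cc q m j * z^j) = (\<Prod>t<m. 1 - z*q^t/q^m)"
proof (induction m)
  case 0 then show ?case by simp
next
  case (Suc m)
  let ?S = "\<Sum>j<Suc m. cc q m j * z^j"
  have A: "(\<Sum>j<Suc m. cc q m (Suc j) * z^(Suc j)) = ?S - 1"
  proof -
    have "(\<Sum>j<Suc (Suc m). cc q m j * z^j) = 1 + (\<Sum>j<Suc m. cc q m (Suc j) * z^(Suc j))"
      by (subst sum.lessThan_Suc_shift) simp
    moreover have "(\<Sum>j<Suc (Suc m). cc q m j * z^j) = ?S"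
      using cc_zero[of q m "Suc m"] assms by simp
    ultimately show ?thesis by simp
  qed
  have "(\<Sum>j<Suc (Suc m). cc q (Suc m) j * z^j) = 1 + (\<Sum>j<Suc m. cc q (Suc m) (Suc j) * z^(Suc j))"
    by (subst sum.lessThan_Suc_shift) simp
  also have "\<dots> = 1 + (\<Sum>j<Suc m. cc q m (Suc j) * z^(Suc j)) - z/q^(Suc m) * ?S"
    unfolding cc_rec[OF assms] by (simp add: algebra_simps sum_subtractf sum_distrib_left sum_divide_distrib)
  also have "\<dots> = (1 - z/q^(Suc m)) * ?S" unfolding A by (simp add: algebra_simps)
  also have "\<dots> = (\<Prod>t<Suc m. 1 - z*q^t/q^(Suc m))"
    unfolding Suc prod.lessThan_Suc_shift using assms by (simp add: field_simps)
  finally show ?case .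
qed

definition EE :: "real \<Rightarrow> real \<Rightarrow> nat \<Rightarrow> nat \<Rightarrow> nat \<Rightarrow> real" where
  "EE q a m r k = (\<Sum>j<Suc m. cc q m j * q^(r*j) * (\<Prod>t<k. 1 - a*q^t*q^j))"

lemma EE_Suc: "EE q a m r (Suc k) = EE q a m r k - a*q^k * EE q a m (Suc r) k"
proof -
  have h: "\<And>j. q^(Suc r * j) = q^j * q^(r*j)" by (simp add: power_add)
  show ?thesis
  unfolding EE_def prod.lessThan_Suc sum_distrib_left sum_subtractf[symmetric] h
  by (rule sum.cong) (simp_all add: algebra_simps)
qed

lemma EE_0: assumes "0 < q" "q < 1" shows "EE q a m r 0 = (\<Prod>t<m. 1 - q^r*q^t/q^m)"
  unfolding EE_def using qbin[OF assms, of m "q^r"] by (simp add: power_mult)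

lemma EE_zero: assumes "0 < q" "q < 1" shows "1 \<le> r \<Longrightarrow> r + k \<le> m \<Longrightarrow> EE q a m r k = 0"
proof (induction k arbitrary: r)
  case 0
  have "(\<Prod>t<m. 1 - q^r*q^t/q^m) = 0"
  proof (rule prod_zero)
    show "\<exists>t\<in>{..<m}. 1 - q^r*q^t/q^m = 0"
    proof (intro bexI[of _ "m - r"])
      have "q^r*q^(m-r) = q^m" using 0 by (simp add: power_add[symmetric])
      thus "1 - q^r*q^(m-r)/q^m = 0" using assms by simp
    qed (use 0 in auto)
  qed simp
  thus ?case using EE_0[OF assms] by simp
next
  case (Suc k)
  thus ?case unfolding EE_Suc using Suc.IH[of r] Suc.IH[of "Suc r"] by simp
qed

lemma EE_top: assumes "0 < q" "q < 1" shows "k \<le> m \<Longrightarrow> EE q a m 0 k = qpoch (1/q^m) q m"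
proof (induction k)
  case 0 thus ?case using EE_0[OF assms] by (simp add: qpoch_def)
next
  case (Suc k) thus ?case unfolding EE_Suc using EE_zero[OF assms, of 1 k m] by simp
qed

lemma refl_sq: assumes "0 < (q::real)" shows
  "(\<Prod>i<l. 1 - 1/q^(Suc i))^2 * q^(l+l*l) = (\<Prod>i<l. 1 - q*q^i)^2"
proof (induction l)
  case 0 thus ?case by simp
next
  case (Suc l)
  have e: "Suc l + Suc l * Suc l = (l + l*l) + 2*Suc l" by simp
  have "(\<Prod>i<Suc l. 1 - 1/q^(Suc i))^2 * q^(Suc l + Suc l * Suc l)
     = ((\<Prod>i<l. 1 - 1/q^(Suc i))^2 * q^(l+l*l)) * ((1 - 1/q^(Suc l)) * q^(Suc l))^2"
    unfolding e power_add by (simp add: power_mult_distrib power_mult power2_eq_square algebra_simps)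
  also have "(1 - 1/q^(Suc l)) * q^(Suc l) = -(1 - q*q^l)" using assms by (simp add: field_simps)
  finally show ?case unfolding Suc by (simp add: power2_eq_square algebra_simps)
qed

lemma qm_sq: assumes "0 < q" shows "(qpoch (1/q^l) q l)^2 * q^(l+l*l) = (qpoch q q l)^2"
proof -
  have "qpoch (1/q^l) q l = (\<Prod>i<l. 1 - 1/q^l*q^(l - Suc i))"
    unfolding qpoch_def by (rule prod.nat_diff_reindex[symmetric])
  also have "\<dots> = (\<Prod>i<l. 1 - 1/q^(Suc i))"
  proof (rule prod.cong)
    fix i assume "i \<in> {..<l}"
    hence "l = (l - Suc i) + Suc i" by simp
    hence "q^l = q^(l - Suc i) * q^(Suc i)" by (metis power_add)
    thus "1 - 1/q^l*q^(l - Suc i) = 1 - 1/q^(Suc i)" using assms by (simp add: field_simps)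
  qed simp
  finally show ?thesis using refl_sq[OF assms, of l] by (simp add: qpoch_def)
qed

lemma choose_split: "(Suc (j+k) choose 2) = (Suc j choose 2) + (Suc k choose 2) + j*k"
  by (induction k) (simp_all add: numeral_2_eq_2)

definition vv :: "real \<Rightarrow> real \<Rightarrow> nat \<Rightarrow> nat \<Rightarrow> real" where
  "vv q \<alpha> m j = cc q m j * q^(m*j) * q powr (\<alpha> * real j + real (Suc j choose 2)) / qpoch (q powr (\<alpha>+1)) q j"

definition mu :: "real \<Rightarrow> real \<Rightarrow> nat \<Rightarrow> real" where
  "mu q \<alpha> s = qpoch (q powr (\<alpha>+1)) q s * q powr (- real ((s+1) choose 2) - \<alpha> * real s)"

definition cm :: "real \<Rightarrow> real \<Rightarrow> nat \<Rightarrow> real" where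
  "cm q \<alpha> m = qpoch (q powr (\<alpha>+1)) q m * q^m / qpoch q q m"

lemma a_bounds: assumes "0 < q" "q < 1" "(\<alpha>::real) > -1" shows "0 < q powr (\<alpha>+1)" "q powr (\<alpha>+1) < 1"
  using assms powr_less_mono2[of "\<alpha>+1" q 1] by auto

lemma pow_combine: assumes "0 < q" "k \<le> m"
  shows "q^(m*j) * q powr (\<alpha> * real j + real (Suc j choose 2)) * q powr (- real ((j+k+1) choose 2) - \<alpha> * real (j+k))
    = q powr (- real (Suc k choose 2) - \<alpha> * real k) * q^((m-k)*j)"
proof -
  have e1: "q^(m*j) = q powr (real m * real j)" using assms by (simp add: powr_realpow[symmetric])
  have e2: "q^((m-k)*j) = q powr (real m * real j - real k * real j)" using assms
    by (simp add: powr_realpow[symmetric] of_nat_diff left_diff_distrib)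
  have c: "real ((j+k+1) choose 2) = real (Suc j choose 2) + real (Suc k choose 2) + real j * real k"
    using choose_split[of j k] by simp
  show ?thesis unfolding e1 e2 c powr_add[symmetric]
    by (simp add: algebra_simps)
qed

lemma prod_v_mu: assumes "0 < q" "q < 1" "\<alpha> > -1" "k \<le> m"
  shows "vv q \<alpha> m j * mu q \<alpha> (j+k) = q powr (- real (Suc k choose 2) - \<alpha> * real k) *
     (cc q m j * q^((m-k)*j) * (\<Prod>t<k. 1 - q powr (\<alpha>+1) * q^t * q^j))"
proof -
  have P: "qpoch (q powr (\<alpha>+1)) q j > 0" using a_bounds[OF assms(1-3)] assms
    by (intro qpoch_pos) auto
  have "vv q \<alpha> m j * mu q \<alpha> (j+k) = cc q m j * (\<Prod>t<k. 1 - q powr (\<alpha>+1) * q^t * q^j) *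
    (q^(m*j) * q powr (\<alpha> * real j + real (Suc j choose 2)) * q powr (- real ((j+k+1) choose 2) - \<alpha> * real (j+k)))"
    unfolding vv_def mu_def qpoch_add using P by (simp add: field_simps)
  also have "\<dots> = q powr (- real (Suc k choose 2) - \<alpha> * real k) *
     (cc q m j * q^((m-k)*j) * (\<Prod>t<k. 1 - q powr (\<alpha>+1) * q^t * q^j))"
    unfolding pow_combine[OF assms(1,4)] by simp
  finally show ?thesis .
qed

definition SS :: "real \<Rightarrow> real \<Rightarrow> nat \<Rightarrow> nat \<Rightarrow> nat \<Rightarrow> real" where
  "SS q \<alpha> n l j = (\<Sum>k<Suc n. mu q \<alpha> (j+k) * vv q \<alpha> l k)"

lemma vv_zero: "0 < q \<Longrightarrow> l < k \<Longrightarrow> vv q \<alpha> l k = 0"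
  unfolding vv_def using cc_zero[of q l k] by simp

lemma SS_eq: assumes "0 < q" "q < 1" "\<alpha> > -1" "l \<le> n" "j \<le> l"
  shows "SS q \<alpha> n l j = q powr (- real (Suc j choose 2) - \<alpha> * real j) * EE q (q powr (\<alpha>+1)) l (l-j) j"
proof -
  have "SS q \<alpha> n l j = (\<Sum>k<Suc l. mu q \<alpha> (j+k) * vv q \<alpha> l k)"
    unfolding SS_def
    by (rule sum.mono_neutral_right) (use assms vv_zero in auto)
  also have "\<dots> = (\<Sum>k<Suc l. q powr (- real (Suc j choose 2) - \<alpha> * real j) *
     (cc q l k * q^((l-j)*k) * (\<Prod>t<j. 1 - q powr (\<alpha>+1) * q^t * q^k)))"
    by (rule sum.cong) (use prod_v_mu[OF assms(1-3,5)] in \<open>auto simp: add.commute mult.commute\<close>)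
  finally show ?thesis unfolding EE_def sum_distrib_left by (simp add: mult_ac)
qed

lemma D_sym: "(\<Sum>j<Suc n. vv q \<alpha> m j * SS q \<alpha> n l j) = (\<Sum>j<Suc n. vv q \<alpha> l j * SS q \<alpha> n m j)"
  unfolding SS_def sum_distrib_left
  by (subst sum.swap) (simp add: add.commute mult_ac)

lemma SS_zero: assumes "0 < q" "q < 1" "\<alpha> > -1" "l \<le> n" "j < l"
  shows "SS q \<alpha> n l j = 0"
  using SS_eq[OF assms(1-4), of j] EE_zero[OF assms(1,2), of "l-j" j l] assms by simp

lemma D_low: assumes "0 < q" "q < 1" "\<alpha> > -1" "m \<le> l" "l \<le> n"
  shows "(\<Sum>j<Suc n. vv q \<alpha> m j * SS q \<alpha> n l j) = (if m = l then vv q \<alpha> l l * SS q \<alpha> n l l else 0)"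
proof (cases "m = l")
  case True
  have "(\<Sum>j<Suc n. vv q \<alpha> m j * SS q \<alpha> n l j) = vv q \<alpha> m l * SS q \<alpha> n l l
     + (\<Sum>j\<in>{..<Suc n} - {l}. vv q \<alpha> m j * SS q \<alpha> n l j)"
    by (rule sum.remove) (use assms in auto)
  also have "(\<Sum>j\<in>{..<Suc n} - {l}. vv q \<alpha> m j * SS q \<alpha> n l j) = 0"
  proof (rule sum.neutral, rule ballI)
    fix j assume j: "j \<in> {..<Suc n} - {l}"
    show "vv q \<alpha> m j * SS q \<alpha> n l j = 0"
    proof (cases "j < l")
      case True thus ?thesis using SS_zero[OF assms(1-3,5) True] by simp
    next
      case False thus ?thesis using j True vv_zero[OF assms(1), of m j] by auto
    qed
  qed
  finally show ?thesis using True by simp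
next
  case False
  have "(\<Sum>j<Suc n. vv q \<alpha> m j * SS q \<alpha> n l j) = 0"
  proof (rule sum.neutral, rule ballI)
    fix j assume j: "j \<in> {..<Suc n}"
    show "vv q \<alpha> m j * SS q \<alpha> n l j = 0"
    proof (cases "j < l")
      case True thus ?thesis using SS_zero[OF assms(1-3,5) True] by simp
    next
      case False thus ?thesis using \<open>m \<noteq> l\<close> assms vv_zero[OF assms(1), of m j] by auto
    qed
  qed
  thus ?thesis using False by simp
qed

lemma diag: assumes "0 < q" "q < 1" "\<alpha> > -1" "l \<le> n"
  shows "cm q \<alpha> l * (vv q \<alpha> l l * SS q \<alpha> n l l) = 1"
proof -
  have P: "qpoch (q powr (\<alpha>+1)) q l > 0" using a_bounds[OF assms(1-3)] assms
    by (intro qpoch_pos) auto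
  have Q: "qpoch q q l > 0" using assms by (intro qpoch_pos) auto
  have SSl: "SS q \<alpha> n l l = q powr (- real (Suc l choose 2) - \<alpha> * real l) * qpoch (1/q^l) q l"
    using SS_eq[OF assms, of l] EE_top[OF assms(1,2), of l l] by simp
  have pw: "q powr (\<alpha> * real l + real (Suc l choose 2)) * q powr (- real (Suc l choose 2) - \<alpha> * real l) = 1"
    unfolding powr_add[symmetric] using assms by simp
  have "cm q \<alpha> l * (vv q \<alpha> l l * SS q \<alpha> n l l) =
     (qpoch (1/q^l) q l)^2 * q^(l+l*l) / (qpoch q q l)^2 *
     (q powr (\<alpha> * real l + real (Suc l choose 2)) * q powr (- real (Suc l choose 2) - \<alpha> * real l))"
    unfolding cm_def vv_def SSl cc_def using P Q by (simp add: field_simps power2_eq_square power_add)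
  also have "\<dots> = 1" unfolding pw qm_sq[OF assms(1)] using Q by simp
  finally show ?thesis .
qed

lemma entry_one: assumes "0 < q" "q < 1" "\<alpha> > -1" "m \<le> n" "l \<le> n"
  shows "cm q \<alpha> l * (\<Sum>j<Suc n. vv q \<alpha> m j * SS q \<alpha> n l j) = (if m = l then 1 else 0)"
proof (cases "m \<le> l")
  case True thus ?thesis using D_low[OF assms(1-3) True assms(5)] diag[OF assms(1-3,5)] by simp
next
  case False
  hence lm: "l \<le> m" "m \<noteq> l" by auto
  have "(\<Sum>j<Suc n. vv q \<alpha> m j * SS q \<alpha> n l j) = (\<Sum>j<Suc n. vv q \<alpha> l j * SS q \<alpha> n m j)"
    by (rule D_sym)
  also have "\<dots> = 0" using D_low[OF assms(1-3) lm(1) assms(4)] lm(2) by (simp del: sum.lessThan_Suc)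
  finally show ?thesis using lm(2) by (simp del: sum.lessThan_Suc)
qed

lemma gamma_term: assumes "0 < q" "q < 1" "\<alpha> > -1"
  shows "(qpoch (q powr (\<alpha>+1)) q m * q ^ (m*(j+k+1)) *
      qpoch (q powr (- real m)) q j * qpoch (q powr (- real m)) q k *
      q powr (\<alpha> * real (j+k) + real ((j+1) choose 2) + real ((k+1) choose 2)))
     / (qpoch q q m * qpoch q q j * qpoch q q k *
        qpoch (q powr (\<alpha>+1)) q j * qpoch (q powr (\<alpha>+1)) q k)
   = cm q \<alpha> m * vv q \<alpha> m j * vv q \<alpha> m k"
proof -
  have Pj: "qpoch (q powr (\<alpha>+1)) q j > 0" "qpoch (q powr (\<alpha>+1)) q k > 0"
    using a_bounds[OF assms] assms by (auto intro: qpoch_pos)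
  have Q: "qpoch q q m > 0" "qpoch q q j > 0" "qpoch q q k > 0"
    using assms by (auto intro: qpoch_pos)
  have u: "q powr (- real m) = 1/q^m" using assms by (simp add: powr_minus_divide powr_realpow)
  have pw: "q powr (\<alpha> * real (j+k) + real ((j+1) choose 2) + real ((k+1) choose 2)) =
     q powr (\<alpha> * real j + real (Suc j choose 2)) * q powr (\<alpha> * real k + real (Suc k choose 2))"
    unfolding powr_add[symmetric] by (simp add: algebra_simps)
  have qp: "q ^ (m*(j+k+1)) = q^m * q^(m*j) * q^(m*k)"
    by (simp add: power_add[symmetric] algebra_simps)
  show ?thesis unfolding pw qp u cm_def vv_def cc_def using Pj Q
    by (simp add: field_simps)
qed

theorem mainTheorem9:
  fixes q \<alpha> :: real and n :: nat
  assumes "0 < q" "q < 1" "\<alpha> > -1"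
  shows "invertible_mat (momMat q \<alpha> n) \<and>
         momMat q \<alpha> n * gammaMat q \<alpha> n = 1\<^sub>m (n+1) \<and>
         gammaMat q \<alpha> n * momMat q \<alpha> n = 1\<^sub>m (n+1)"
proof -
  define V where "V = mat (n+1) (n+1) (\<lambda>(m,j). vv q \<alpha> m j)"
  define W where "W = mat (n+1) (n+1) (\<lambda>(m,j). cm q \<alpha> m * vv q \<alpha> m j)"
  let ?M = "momMat q \<alpha> n"
  let ?G = "gammaMat q \<alpha> n"
  have cV: "V \<in> carrier_mat (n+1) (n+1)" and cW: "W \<in> carrier_mat (n+1) (n+1)"
    and cM: "?M \<in> carrier_mat (n+1) (n+1)" and cG: "?G \<in> carrier_mat (n+1) (n+1)"
    by (auto simp: V_def W_def momMat_def gammaMat_def)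
  have Mij: "\<And>j k. j < n+1 \<Longrightarrow> k < n+1 \<Longrightarrow> ?M $$ (j,k) = mu q \<alpha> (j+k)"
    by (simp add: momMat_def mu_def)
  have G: "?G = transpose_mat W * V"
  proof (rule eq_matI)
    fix j k assume jk: "j < dim_row (transpose_mat W * V)" "k < dim_col (transpose_mat W * V)"
    hence jk': "j < n+1" "k < n+1" by (auto simp: V_def W_def)
    have "(transpose_mat W * V) $$ (j,k) = (\<Sum>i<Suc n. cm q \<alpha> i * vv q \<alpha> i j * vv q \<alpha> i k)"
      using jk' by (simp add: V_def W_def scalar_prod_def lessThan_atLeast0)
    also have "\<dots> = gammaEntry q \<alpha> n j k"
      unfolding gammaEntry_def gamma_term[OF assms]
      by (simp add: atLeast0AtMost lessThan_Suc_atMost)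
    finally show "?G $$ (j,k) = (transpose_mat W * V) $$ (j,k)" using jk' by (simp add: gammaMat_def)
  qed (auto simp: gammaMat_def V_def W_def)
  have VMW: "V * (?M * transpose_mat W) = 1\<^sub>m (n+1)"
  proof (rule eq_matI)
    fix m l assume ml: "m < dim_row (1\<^sub>m (n+1))" "l < dim_col (1\<^sub>m (n+1))"
    hence ml': "m \<le> n" "l \<le> n" by auto
    have "(V * (?M * transpose_mat W)) $$ (m,l) = (\<Sum>j<Suc n. vv q \<alpha> m j * (\<Sum>k<Suc n. mu q \<alpha> (j+k) * (cm q \<alpha> l * vv q \<alpha> l k)))"
      using ml' cM by (simp add: V_def W_def scalar_prod_def lessThan_atLeast0 Mij less_Suc_eq_le)
    also have "\<dots> = cm q \<alpha> l * (\<Sum>j<Suc n. vv q \<alpha> m j * SS q \<alpha> n l j)"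
      unfolding SS_def sum_distrib_left by (simp add: mult_ac)
    also have "\<dots> = 1\<^sub>m (n+1) $$ (m,l)" using entry_one[OF assms ml'] ml by simp
    finally show "(V * (?M * transpose_mat W)) $$ (m,l) = 1\<^sub>m (n+1) $$ (m,l)" .
  qed (auto simp: V_def W_def)
  have cMW: "?M * transpose_mat W \<in> carrier_mat (n+1) (n+1)" using cM cW by auto
  have MWV: "(?M * transpose_mat W) * V = 1\<^sub>m (n+1)"
    by (rule mat_mult_left_right_inverse[OF cV cMW VMW])
  have MG: "?M * ?G = 1\<^sub>m (n+1)"
  proof -
    have "?M * (transpose_mat W * V) = (?M * transpose_mat W) * V"
      by (rule assoc_mult_mat[symmetric, OF cM _ cV]) (use cW in simp)
    thus ?thesis unfolding G MWV .
  qed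
  have GM: "?G * ?M = 1\<^sub>m (n+1)"
    by (rule mat_mult_left_right_inverse[OF cM cG MG])
  have "invertible_mat ?M"
    unfolding invertible_mat_def inverts_mat_def square_mat.simps
    using MG GM cM cG by auto
  thus ?thesis using MG GM by simp
qed

end
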